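(* Let $G=(V,E)$ be a finite simple undirected graph with zipper constraint collection $\mathcal{Z}$, let $D\subseteq Z^2$, and let $\mathbb{S}$ be a downstream-enabled prescription on $D$. If $\mathcal{K}^+$ is a clique cover of the augmented graph $G^+(\mathbb{S})$, then there is a clique cover $\mathcal{K}$ of $G$ with $|\mathcal{K}|\le|\mathcal{K}^+|$ such that: (i) $\mathcal{K}$ is faithful to $\mathbb{S}$; and (ii) $\mathcal{K}$ satisfies every zipper constraint $(U,W,y)\in\mathcal{Z}$ with $U\in D$ and $W\in D$.
   Context: A clique cover of a graph is a collection of cliques whose union is the vertex set. A zipper constraint collection is a finite set $\mathcal{Z}=\{(U_1,W_1,y_1),\dots,(U_m,W_m,y_m)\}$, where each $U_i,W_i\in E$ is an edge of $G$ (a 2-element vertex set) and each $y_i$ is a label. A clique cover $\mathcal{K}$ satisfies the constraint $(U,W,y)$ if either no clique of $\mathcal{K}$ contains $U$, or some clique of $\mathcal{K}$ contains $W$. Let $Z^2=\{U_1,\dots,U_m,W_1,\dots,W_m\}$. Write $P\uparrow Q$ if $(P,Q,y)\in\mathcal{Z}$ for some $y$. Write $P_a\rightsquigarrow P_b$ ("$P_b$ is downstream of $P_a$") if $P_a\uparrow P_b$, or if $P_a\uparrow P_c$ for some $P_c\in Z^2$ with $P_c\rightsquigarrow P_b$; that is, $\rightsquigarrow$ is the transitive closure of $\uparrow$. A prescription on $D\subseteq Z^2$ is a subset $\mathbb{S}\subseteq D$; the elements of $D\setminus\mathbb{S}$ are off pairs. $\mathbb{S}$ is downstream enabled if, whenever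 $P_a\in\mathbb{S}$ and $P_a\rightsquigarrow P_b$, we have $P_b\in\mathbb{S}$ or $P_b\notin D$. A clique cover $\mathcal{K}$ of $G$ is faithful to $\mathbb{S}$ if every $P\in\mathbb{S}$ lies in some clique of $\mathcal{K}$ and no $P\in D\setminus\mathbb{S}$ lies in any clique of $\mathcal{K}$. Let $G'=(V,E\setminus(D\setminus\mathbb{S}))$. The augmented graph $G^+(\mathbb{S})$ has vertex set $\{[u]:u\in V\}\cup\{[u,w]:\{u,w\}\in\mathbb{S}\}$, where each $[A]$ is a new formal vertex labeled by the set $A$. Two distinct vertices $[A],[B]$ are adjacent if and only if $A\cup B$ is a clique in $G'$. *)

theory Defs
  imports Main
begin

definition simple_graph :: "'a set \<Rightarrow> 'a set set \<Rightarrow> bool" where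
  "simple_graph V E \<longleftrightarrow> finite V \<and>
     (\<forall>e\<in>E. \<exists>u v. u \<noteq> v \<and> u \<in> V \<and> v \<in> V \<and> e = {u, v})"

definition is_clique :: "'a set \<Rightarrow> 'a set set \<Rightarrow> 'a set \<Rightarrow> bool" where
  "is_clique V E C \<longleftrightarrow> C \<subseteq> V \<and> (\<forall>u\<in>C. \<forall>v\<in>C. u \<noteq> v \<longrightarrow> {u, v} \<in> E)"

definition clique_cover :: "'a set \<Rightarrow> 'a set set \<Rightarrow> 'a set set \<Rightarrow> bool" where
  "clique_cover V E K \<longleftrightarrow> (\<forall>C\<in>K. is_clique V E C) \<and> \<Union>K = V"

definition satisfies_zipper :: "'a set set \<Rightarrow> 'a set \<times> 'a set \<times> 'l \<Rightarrow> bool" where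
  "satisfies_zipper K z \<longleftrightarrow>
     (case z of (U, W, y) \<Rightarrow> (\<not> (\<exists>C\<in>K. U \<subseteq> C)) \<or> (\<exists>C\<in>K. W \<subseteq> C))"

definition Z2 :: "('a set \<times> 'a set \<times> 'l) set \<Rightarrow> 'a set set" where
  "Z2 Z = {U. \<exists>W y. (U, W, y) \<in> Z} \<union> {W. \<exists>U y. (U, W, y) \<in> Z}"

definition up_rel :: "('a set \<times> 'a set \<times> 'l) set \<Rightarrow> ('a set \<times> 'a set) set" where
  "up_rel Z = {(P, Q). \<exists>y. (P, Q, y) \<in> Z}"

definition downstream :: "('a set \<times> 'a set \<times> 'l) set \<Rightarrow> 'a set \<Rightarrow> 'a set \<Rightarrow> bool" where
  "downstream Z Pa Pb \<longleftrightarrow> (Pa, Pb) \<in> (up_rel Z)\<^sup>+"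

definition downstream_enabled ::
  "('a set \<times> 'a set \<times> 'l) set \<Rightarrow> 'a set set \<Rightarrow> 'a set set \<Rightarrow> bool" where
  "downstream_enabled Z D S \<longleftrightarrow>
     (\<forall>Pa Pb. Pa \<in> S \<and> downstream Z Pa Pb \<longrightarrow> Pb \<in> S \<or> Pb \<notin> D)"

definition faithful :: "'a set set \<Rightarrow> 'a set set \<Rightarrow> 'a set set \<Rightarrow> bool" where
  "faithful D S K \<longleftrightarrow> (\<forall>P\<in>S. \<exists>C\<in>K. P \<subseteq> C) \<and> (\<forall>P\<in>D - S. \<not> (\<exists>C\<in>K. P \<subseteq> C))"

text \<open>Augmented graph G+(S): formal vertex [A] is represented by the set A itself
  (singletons {u} for u in V, and the edges in S).  G' = (V, E - (D - S)).\<close>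
definition aug_vertices :: "'a set \<Rightarrow> 'a set set \<Rightarrow> 'a set set" where
  "aug_vertices V S = (\<lambda>u. {u}) ` V \<union> S"

definition aug_edges :: "'a set \<Rightarrow> 'a set set \<Rightarrow> 'a set set \<Rightarrow> 'a set set \<Rightarrow> 'a set set set" where
  "aug_edges V E D S = {{A, B} | A B. A \<in> aug_vertices V S \<and> B \<in> aug_vertices V S \<and> A \<noteq> B
       \<and> is_clique V (E - (D - S)) (A \<union> B)}"

end

theory Submission
  imports Defs
begin

theorem lemma4:
  fixes V :: "'a set" and E :: "'a set set" and Z :: "('a set \<times> 'a set \<times> 'l) set"
    and D S :: "'a set set" and Kp :: "'a set set set"
  assumes "simple_graph V E"
    and "finite Z"
    and "\<forall>(U, W, y)\<in>Z. U \<in> E \<and> W \<in> E"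
    and "D \<subseteq> Z2 Z"
    and "S \<subseteq> D"
    and "downstream_enabled Z D S"
    and "clique_cover (aug_vertices V S) (aug_edges V E D S) Kp"
  shows "\<exists>K. clique_cover V E K \<and> card K \<le> card Kp \<and> faithful D S K \<and>
           (\<forall>(U, W, y)\<in>Z. U \<in> D \<and> W \<in> D \<longrightarrow> satisfies_zipper K (U, W, y))"
proof -
  have DE: "D \<subseteq> E" using assms(3,4) unfolding Z2_def by fastforce
  have SE: "S \<subseteq> E" using DE assms(5) by blast
  have Eform: "\<And>e. e \<in> E \<Longrightarrow> \<exists>u v. u \<noteq> v \<and> u \<in> V \<and> v \<in> V \<and> e = {u, v}"
    using assms(1) unfolding simple_graph_def by blast
  have finZ2: "finite (Z2 Z)"
  proof -
    have "Z2 Z \<subseteq> fst ` Z \<union> (fst \<circ> snd) ` Z"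
    proof
      fix P assume "P \<in> Z2 Z"
      then consider W y where "(P, W, y) \<in> Z" | U y where "(U, P, y) \<in> Z" unfolding Z2_def by blast
      thus "P \<in> fst ` Z \<union> (fst \<circ> snd) ` Z"
        by cases (metis UnI1 fst_conv image_eqI, metis UnI2 comp_apply fst_conv snd_conv image_eqI)
    qed
    thus ?thesis using assms(2) finite_subset by blast
  qed
  have finAV: "finite (aug_vertices V S)"
    unfolding aug_vertices_def
  proof -
    have "finite V" using assms(1) simple_graph_def by blast
    moreover have "S \<subseteq> Z2 Z" using assms(4,5) by (rule order_trans[rotated])
    hence "finite S" using finZ2 by (rule finite_subset)
    ultimately show "finite ((\<lambda>u. {u}) ` V \<union> S)" by simp
  qed
  have cc: "\<forall>C\<in>Kp. is_clique (aug_vertices V S) (aug_edges V E D S) C"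
    and un: "\<Union>Kp = aug_vertices V S" using assms(7) unfolding clique_cover_def by auto
  have "Kp \<subseteq> Pow (aug_vertices V S)" using un by blast
  hence finKp: "finite Kp" using finAV finite_subset by blast
  define K where "K = Union ` Kp"
  have AV: "A \<subseteq> V" if "A \<in> aug_vertices V S" for A
  proof (cases "A \<in> S")
    case True
    then obtain u v where "u \<in> V" "v \<in> V" "A = {u,v}" using SE Eform by blast
    thus ?thesis by simp
  next
    case False
    thus ?thesis using that unfolding aug_vertices_def by auto
  qed
  have G'clique: "is_clique V (E - (D - S)) (\<Union>C)" if "C \<in> Kp" for C
  proof -
    have C: "C \<subseteq> aug_vertices V S"
      and Cp: "\<And>A B. A \<in> C \<Longrightarrow> B \<in> C \<Longrightarrow> A \<noteq> B \<Longrightarrow> {A, B} \<in> aug_edges V E D S"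
      using cc that unfolding is_clique_def by auto
    show ?thesis unfolding is_clique_def
    proof (intro conjI ballI impI)
      show "\<Union>C \<subseteq> V" using C AV by blast
    next
      fix u v assume u: "u \<in> \<Union>C" and v: "v \<in> \<Union>C" and uv: "u \<noteq> v"
      then obtain A B where A: "A \<in> C" "u \<in> A" and B: "B \<in> C" "v \<in> B" by blast
      show "{u, v} \<in> E - (D - S)"
      proof (cases "A = B")
        case True
        have "A \<in> S"
        proof (rule ccontr)
          assume "A \<notin> S"
          then obtain w where "A = {w}" using C A(1) unfolding aug_vertices_def by blast
          thus False using A B True uv by blast
        qed
        then obtain a b where "a \<noteq> b" "A = {a,b}" using SE Eform by blast
        hence "A = {u,v}" using A B True uv by auto
        moreover have "A \<in> E - (D - S)" using \<open>A \<in> S\<close> SE by auto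
        ultimately show ?thesis by simp
      next
        case False
        have "\<exists>A' B'. {A,B} = {A',B'} \<and> A' \<in> aug_vertices V S \<and> B' \<in> aug_vertices V S \<and> A' \<noteq> B'
              \<and> is_clique V (E - (D - S)) (A' \<union> B')"
          using Cp[OF A(1) B(1) False] unfolding aug_edges_def mem_Collect_eq .
        then obtain A' B' where "{A,B} = {A',B'}" and cl: "is_clique V (E - (D - S)) (A' \<union> B')"
          by (elim exE conjE)
        hence "A' \<union> B' = A \<union> B" by (auto simp: doubleton_eq_iff)
        thus ?thesis using cl A B uv unfolding is_clique_def by blast
      qed
    qed
  qed
  have noOff: "\<not> P \<subseteq> X" if XK: "X \<in> K" and PD: "P \<in> D - S" for P X
  proof
    assume PX: "P \<subseteq> X"
    obtain C where "C \<in> Kp" "X = \<Union>C" using XK K_def by blast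
    hence cl: "is_clique V (E - (D - S)) X" using G'clique by blast
    obtain a b where "a \<noteq> b" "P = {a,b}" using PD DE Eform by blast
    thus False using cl PX PD unfolding is_clique_def by blast
  qed
  have onS: "\<exists>X\<in>K. P \<subseteq> X" if "P \<in> S" for P
  proof -
    have "P \<in> \<Union>Kp" using un that unfolding aug_vertices_def by blast
    then obtain C where "C \<in> Kp" "P \<in> C" by blast
    thus ?thesis unfolding K_def by blast
  qed
  have ccK: "clique_cover V E K"
    unfolding clique_cover_def
  proof (intro conjI ballI)
    fix X assume "X \<in> K"
    then obtain C where "C \<in> Kp" "X = \<Union>C" using K_def by blast
    thus "is_clique V E X" using G'clique unfolding is_clique_def by blast
  next
    show "\<Union>K = V"
    proof
      show "\<Union>K \<subseteq> V" using G'clique unfolding K_def is_clique_def by blast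
    next
      show "V \<subseteq> \<Union>K"
      proof
        fix u assume "u \<in> V"
        hence "{u} \<in> \<Union>Kp" using un unfolding aug_vertices_def by blast
        then obtain C where "C \<in> Kp" "{u} \<in> C" by blast
        thus "u \<in> \<Union>K" unfolding K_def by blast
      qed
    qed
  qed
  have cardK: "card K \<le> card Kp" unfolding K_def using finKp card_image_le by blast
  have faith: "faithful D S K" unfolding faithful_def using onS noOff by blast
  have zip: "\<forall>(U, W, y)\<in>Z. U \<in> D \<and> W \<in> D \<longrightarrow> satisfies_zipper K (U, W, y)"
  proof (clarify)
    fix U W y assume z: "(U, W, y) \<in> Z" and UD: "U \<in> D" and WD: "W \<in> D"
    show "satisfies_zipper K (U, W, y)"
    proof (cases "\<exists>X\<in>K. U \<subseteq> X")
      case True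
      hence "U \<in> S" using noOff UD by blast
      moreover have "downstream Z U W" unfolding downstream_def up_rel_def using z by blast
      ultimately have "W \<in> S" using assms(6) WD unfolding downstream_enabled_def by blast
      thus ?thesis using onS by (simp add: satisfies_zipper_def)
    qed (simp add: satisfies_zipper_def)
  qed
  show ?thesis using ccK cardK faith zip by blast
qed

end
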